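(* Let $G$ be a graph with vertex order $v_1,\ldots,v_n$, let $D$ be a minimal dominating set of $G$, let $u,w\in D$ be adjacent, let $v\in P_D(u)$, and let $X_{uv}$, $D^*$, $Z_{uv}$ be as in the context (so $D^*=((D\setminus\{u\})\cup X_{uv}\cup\{v\})\setminus Z_{uv}$). Then for every $z\in Z_{uv}$: (1) $z\notin N[X_{uv}\cup\{v\}]$; (2) $z$ has a neighbor in $D^*\setminus(X_{uv}\cup\{v\})$; (3) there is a vertex $x\in N[X_{uv}\cup\{v\}]\setminus N[u]$ adjacent to $z$ with $x\notin N[D^*\setminus(X_{uv}\cup\{v\})]$. Furthermore, for every $x\in N[X_{uv}\cup\{v\}]\setminus N[u]$ with $x\notin N[D^*\setminus(X_{uv}\cup\{v\})]$, there is $z\in Z_{uv}$ adjacent to $x$.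
   Context: Graphs are finite, simple, undirected; $N(x)$ is the open and $N[x]=N(x)\cup\{x\}$ the closed neighborhood, $N[S]=\bigcup_{x\in S}N[x]$. A dominating set is $D\subseteq V(G)$ with $N[D]=V(G)$; it is minimal if no proper subset is dominating. For a dominating set $D$ and $x\in D$, a vertex $y$ is private for $x$ if $y\in N[x]\setminus N[D\setminus\{x\}]$; $P_D[x]$ is the set of such $y$ and $P_D(x)=P_D[x]\cap N(x)$. Fix an order $v_1,\ldots,v_n$ of $V(G)$. Greedy removal from a dominating set $D'$: while the current set $S$ is not a minimal dominating set, remove from $S$ the vertex $v_i$ of smallest index $i$ such that $S\setminus\{v_i\}$ is still dominating. Given $D,u,v$: $X_{uv}$ is built by starting from $\emptyset$ and repeatedly adding the smallest-index vertex of $P_D(u)\setminus N[\{v\}\cup X_{uv}]$ while this set is nonempty. Let $D'=(D\setminus\{u\})\cup X_{uv}\cup\{v\}$, let $D^*$ be the result of greedy removal from $D'$, and $Z_{uv}=D'\setminus D^*$. *)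

theory Defs
  imports Main
begin

definition graph :: "'a set \<Rightarrow> ('a \<Rightarrow> 'a \<Rightarrow> bool) \<Rightarrow> bool" where
  "graph V E \<longleftrightarrow> finite V \<and> (\<forall>x y. E x y \<longrightarrow> x \<in> V \<and> y \<in> V) \<and>
     (\<forall>x y. E x y \<longrightarrow> E y x) \<and> (\<forall>x. \<not> E x x)"

definition nbh :: "'a set \<Rightarrow> ('a \<Rightarrow> 'a \<Rightarrow> bool) \<Rightarrow> 'a \<Rightarrow> 'a set" where
  "nbh V E x = {y \<in> V. E x y}"

definition cnbh :: "'a set \<Rightarrow> ('a \<Rightarrow> 'a \<Rightarrow> bool) \<Rightarrow> 'a \<Rightarrow> 'a set" where
  "cnbh V E x = insert x (nbh V E x)"

definition cnbh_set :: "'a set \<Rightarrow> ('a \<Rightarrow> 'a \<Rightarrow> bool) \<Rightarrow> 'a set \<Rightarrow> 'a set" where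
  "cnbh_set V E S = (\<Union>x\<in>S. cnbh V E x)"

definition dominating :: "'a set \<Rightarrow> ('a \<Rightarrow> 'a \<Rightarrow> bool) \<Rightarrow> 'a set \<Rightarrow> bool" where
  "dominating V E D \<longleftrightarrow> D \<subseteq> V \<and> cnbh_set V E D = V"

definition min_dominating :: "'a set \<Rightarrow> ('a \<Rightarrow> 'a \<Rightarrow> bool) \<Rightarrow> 'a set \<Rightarrow> bool" where
  "min_dominating V E D \<longleftrightarrow> dominating V E D \<and> (\<forall>D'. D' \<subset> D \<longrightarrow> \<not> dominating V E D')"

definition priv_closed :: "'a set \<Rightarrow> ('a \<Rightarrow> 'a \<Rightarrow> bool) \<Rightarrow> 'a set \<Rightarrow> 'a \<Rightarrow> 'a set" where
  "priv_closed V E D x = cnbh V E x - cnbh_set V E (D - {x})"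

definition priv_open :: "'a set \<Rightarrow> ('a \<Rightarrow> 'a \<Rightarrow> bool) \<Rightarrow> 'a set \<Rightarrow> 'a \<Rightarrow> 'a set" where
  "priv_open V E D x = priv_closed V E D x \<inter> nbh V E x"

text \<open>The vertex order is given by an index function idx (injective on V):
  v_i has index idx v_i.  One step of greedy removal.\<close>
definition greedy_step :: "'a set \<Rightarrow> ('a \<Rightarrow> 'a \<Rightarrow> bool) \<Rightarrow> ('a \<Rightarrow> nat) \<Rightarrow> 'a set \<Rightarrow> 'a set" where
  "greedy_step V E idx S =
     (if min_dominating V E S then S
      else S - {ARG_MIN idx y. y \<in> S \<and> dominating V E (S - {y})})"

text \<open>Greedy removal: iterate the step; it removes one vertex per step until a minimal
  dominating set is reached, so card S iterations suffice (afterwards it is a fixpoint).\<close>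
definition greedy_removal :: "'a set \<Rightarrow> ('a \<Rightarrow> 'a \<Rightarrow> bool) \<Rightarrow> ('a \<Rightarrow> nat) \<Rightarrow> 'a set \<Rightarrow> 'a set" where
  "greedy_removal V E idx S = (greedy_step V E idx ^^ card S) S"

definition X_step :: "'a set \<Rightarrow> ('a \<Rightarrow> 'a \<Rightarrow> bool) \<Rightarrow> ('a \<Rightarrow> nat) \<Rightarrow> 'a set \<Rightarrow> 'a \<Rightarrow> 'a \<Rightarrow> 'a set \<Rightarrow> 'a set" where
  "X_step V E idx D u v X =
     (let C = priv_open V E D u - cnbh_set V E ({v} \<union> X) in
      if C = {} then X else insert (ARG_MIN idx y. y \<in> C) X)"

text \<open>Each effective step adds a new vertex of V, so card V iterations reach the final set.\<close>
definition X_uv :: "'a set \<Rightarrow> ('a \<Rightarrow> 'a \<Rightarrow> bool) \<Rightarrow> ('a \<Rightarrow> nat) \<Rightarrow> 'a set \<Rightarrow> 'a \<Rightarrow> 'a \<Rightarrow> 'a set" where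
  "X_uv V E idx D u v = (X_step V E idx D u v ^^ card V) {}"

end

theory Submission
  imports Defs
begin

lemma cnbh_set_iff: "y \<in> cnbh_set V E S \<longleftrightarrow> (\<exists>x\<in>S. y = x \<or> (y \<in> V \<and> E x y))"
  by (auto simp: cnbh_set_def cnbh_def nbh_def)

lemma argmin_in: "P k \<Longrightarrow> P (ARG_MIN (idx::'a\<Rightarrow>nat) y. P y)"
  by (rule arg_min_nat_lemma[THEN conjunct1])

lemma dom_mono:
  assumes "graph V E" "dominating V E A" "A \<subseteq> B" "B \<subseteq> V"
  shows "dominating V E B"
proof -
  have "cnbh_set V E B \<subseteq> V" using assms(4) by (auto simp: cnbh_set_iff)
  moreover have "cnbh_set V E A \<subseteq> cnbh_set V E B" using assms(3) by (auto simp: cnbh_set_def)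
  ultimately show ?thesis using assms(2,4) by (auto simp: dominating_def)
qed

definition Xinv where
  "Xinv V E D u v X \<longleftrightarrow> finite X \<and> X \<subseteq> priv_open V E D u \<and> v \<notin> X \<and>
     (\<forall>a\<in>insert v X. \<forall>b\<in>insert v X. \<not> E a b)"

lemma Xstep_inv:
  assumes g: "graph V E" and inv: "Xinv V E D u v X"
  shows "Xinv V E D u v (X_step V E idx D u v X) \<and>
    (priv_open V E D u - cnbh_set V E ({v} \<union> X) \<noteq> {} \<longrightarrow>
       card (X_step V E idx D u v X) = Suc (card X))"
proof (cases "priv_open V E D u - cnbh_set V E ({v} \<union> X) = {}")
  case True
  then show ?thesis using inv by (simp add: X_step_def Let_def)
next
  case False
  define C where "C = priv_open V E D u - cnbh_set V E ({v} \<union> X)"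
  define y where "y = (ARG_MIN idx y. y \<in> C)"
  from False obtain k where "k \<in> C" unfolding C_def by blast
  hence yC: "y \<in> C" unfolding y_def by (rule argmin_in)
  have st: "X_step V E idx D u v X = insert y X"
    using False by (simp add: X_step_def Let_def C_def y_def)
  have yV: "y \<in> V" using yC by (auto simp: C_def priv_open_def nbh_def)
  have ny: "y \<notin> insert v X" "\<forall>a\<in>insert v X. \<not> E a y"
    using yC yV by (auto simp: C_def cnbh_set_iff)
  have "\<forall>a\<in>insert v X. \<not> E y a" using ny(2) g by (auto simp: graph_def)
  moreover have "\<not> E y y" using g by (auto simp: graph_def)
  ultimately have "Xinv V E D u v (insert y X)"
    using inv ny yC by (auto simp: Xinv_def C_def)
  moreover have "card (insert y X) = Suc (card X)" using inv ny by (auto simp: Xinv_def)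
  ultimately show ?thesis using st False by simp
qed

lemma Xiter:
  assumes g: "graph V E"
  shows "Xinv V E D u v ((X_step V E idx D u v ^^ k) {}) \<and>
    (priv_open V E D u - cnbh_set V E ({v} \<union> (X_step V E idx D u v ^^ k) {}) = {}
     \<or> card ((X_step V E idx D u v ^^ k) {}) \<ge> k)"
proof (induction k)
  case 0
  have "\<not> E v v" using g by (auto simp: graph_def)
  then show ?case by (simp add: Xinv_def)
next
  case (Suc k)
  define X where "X = (X_step V E idx D u v ^^ k) {}"
  have IH: "Xinv V E D u v X"
    "priv_open V E D u - cnbh_set V E ({v} \<union> X) = {} \<or> card X \<ge> k"
    using Suc unfolding X_def by auto
  have S: "Xinv V E D u v (X_step V E idx D u v X)"
    "priv_open V E D u - cnbh_set V E ({v} \<union> X) \<noteq> {} \<Longrightarrow>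
       card (X_step V E idx D u v X) = Suc (card X)"
    using Xstep_inv[OF g IH(1)] by auto
  show ?case
  proof (cases "priv_open V E D u - cnbh_set V E ({v} \<union> X) = {}")
    case True
    hence "X_step V E idx D u v X = X" by (simp add: X_step_def)
    then show ?thesis using True S X_def by simp
  next
    case False
    then show ?thesis using S IH X_def by auto
  qed
qed

lemma X_final:
  assumes g: "graph V E"
  shows "Xinv V E D u v (X_uv V E idx D u v) \<and>
    priv_open V E D u \<subseteq> cnbh_set V E ({v} \<union> X_uv V E idx D u v)"
proof -
  define X where "X = X_uv V E idx D u v"
  have I: "Xinv V E D u v X"
    "priv_open V E D u - cnbh_set V E ({v} \<union> X) = {} \<or> card X \<ge> card V"
    using Xiter[OF g, where D=D and u=u and v=v and idx=idx and k="card V"] unfolding X_def X_uv_def by auto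
  have XV: "X \<subseteq> V" using I(1) by (auto simp: Xinv_def priv_open_def nbh_def)
  have fV: "finite V" using g by (simp add: graph_def)
  have "priv_open V E D u - cnbh_set V E ({v} \<union> X) = {}"
  proof (rule ccontr)
    assume ne: "\<not> ?thesis"
    with I(2) have "card X \<ge> card V" by simp
    hence "X = V" using XV fV by (meson card_seteq)
    moreover have "priv_open V E D u \<subseteq> V" by (auto simp: priv_open_def nbh_def)
    moreover have "X \<subseteq> cnbh_set V E ({v} \<union> X)" by (auto simp: cnbh_set_iff)
    ultimately show False using ne by blast
  qed
  thus ?thesis using I(1) X_def by auto
qed

theorem lemma3:
  fixes V :: "'a set" and E :: "'a \<Rightarrow> 'a \<Rightarrow> bool" and idx :: "'a \<Rightarrow> nat"
    and D :: "'a set" and u w v :: 'a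
  assumes "graph V E"
    and "inj_on idx V"
    and "min_dominating V E D"
    and "u \<in> D" and "w \<in> D" and "E u w"
    and "v \<in> priv_open V E D u"
  shows "let X = X_uv V E idx D u v;
             D' = (D - {u}) \<union> X \<union> {v};
             Ds = greedy_removal V E idx D';
             Z = D' - Ds
         in (\<forall>z\<in>Z.
               z \<notin> cnbh_set V E (X \<union> {v}) \<and>
               (\<exists>y\<in>Ds - (X \<union> {v}). E z y) \<and>
               (\<exists>x\<in>cnbh_set V E (X \<union> {v}) - cnbh V E u.
                  E z x \<and> x \<notin> cnbh_set V E (Ds - (X \<union> {v}))))
          \<and> (\<forall>x\<in>cnbh_set V E (X \<union> {v}) - cnbh V E u.
               x \<notin> cnbh_set V E (Ds - (X \<union> {v})) \<longrightarrow> (\<exists>z\<in>Z. E x z))"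
proof -
  note g = assms(1)
  have sym: "\<And>a b. E a b \<Longrightarrow> E b a" and irr: "\<And>a. \<not> E a a"
    and inV: "\<And>a b. E a b \<Longrightarrow> a \<in> V \<and> b \<in> V" using g by (auto simp: graph_def)
  define X where "X = X_uv V E idx D u v"
  define D' where "D' = (D - {u}) \<union> X \<union> {v}"
  define Ds where "Ds = greedy_removal V E idx D'"
  define Z where "Z = D' - Ds"
  have XF: "Xinv V E D u v X" "priv_open V E D u \<subseteq> cnbh_set V E ({v} \<union> X)"
    using X_final[OF g] X_def by auto
  have Dd: "dominating V E D" using assms(3) by (simp add: min_dominating_def)
  have DV: "D \<subseteq> V" using Dd by (simp add: dominating_def)
  have Pv: "X \<union> {v} \<subseteq> priv_open V E D u" using XF(1) assms(7) by (auto simp: Xinv_def)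
  have priv: "\<And>x d. x \<in> X \<union> {v} \<Longrightarrow> d \<in> D - {u} \<Longrightarrow> x \<noteq> d \<and> \<not> E d x \<and> \<not> E x d"
  proof -
    fix x d assume x: "x \<in> X \<union> {v}" and d: "d \<in> D - {u}"
    have "x \<in> V" "x \<notin> cnbh_set V E (D - {u})" using Pv x by (auto simp: priv_open_def priv_closed_def nbh_def)
    then show "x \<noteq> d \<and> \<not> E d x \<and> \<not> E x d" using d sym by (auto simp: cnbh_set_iff)
  qed
  have indep: "\<And>a b. a \<in> X \<union> {v} \<Longrightarrow> b \<in> X \<union> {v} \<Longrightarrow> \<not> E a b"
    using XF(1) by (auto simp: Xinv_def)
  have XV: "X \<union> {v} \<subseteq> V" using Pv by (auto simp: priv_open_def nbh_def)
  have D'V: "D' \<subseteq> V" using XV DV D'_def by auto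
  have D'd: "dominating V E D'"
  proof -
    have "V \<subseteq> cnbh_set V E D'"
    proof
      fix y assume yV: "y \<in> V"
      have "y \<in> cnbh_set V E D" using yV Dd by (simp add: dominating_def)
      then obtain d where d: "d \<in> D" "y = d \<or> E d y"
        unfolding cnbh_set_iff by blast
      show "y \<in> cnbh_set V E D'"
      proof (cases "d = u")
        case False
        then show ?thesis using d yV D'_def by (auto simp: cnbh_set_iff)
      next
        case True
        show ?thesis
        proof (cases "y = u")
          case True
          then show ?thesis using assms(5,6) yV sym \<open>d = u\<close> d irr D'_def
            by (auto simp: cnbh_set_iff intro!: bexI[of _ w])
        next
          case yu: False
          show ?thesis
          proof (cases "y \<in> cnbh_set V E (D - {u})")
            case True
            then show ?thesis by (auto simp: cnbh_set_iff D'_def)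
          next
            case False
            hence "y \<in> priv_open V E D u" using yu d \<open>d = u\<close> yV
              by (auto simp: priv_open_def priv_closed_def cnbh_def nbh_def)
            hence "y \<in> cnbh_set V E ({v} \<union> X)" using XF(2) by auto
            then show ?thesis by (auto simp: cnbh_set_iff D'_def)
          qed
        qed
      qed
    qed
    moreover have "cnbh_set V E D' \<subseteq> V" using D'V by (auto simp: cnbh_set_iff)
    ultimately show ?thesis using D'V by (auto simp: dominating_def)
  qed
  define GI where "GI S \<longleftrightarrow> S \<subseteq> D' \<and> X \<union> {v} \<subseteq> S \<and> dominating V E S" for S
  have GIstep: "GI (greedy_step V E idx S)" if "GI S" for S
  proof (cases "min_dominating V E S")
    case True then show ?thesis using that by (simp add: greedy_step_def)
  next
    case False
    have Sd: "dominating V E S" using that GI_def by auto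
    then obtain D'' where D'': "D'' \<subset> S" "dominating V E D''" using False by (auto simp: min_dominating_def)
    then obtain k where k: "k \<in> S" "k \<notin> D''" by blast
    have SV: "S \<subseteq> V" using Sd by (simp add: dominating_def)
    have "dominating V E (S - {k})" proof (rule dom_mono[OF g D''(2)])
      show "D'' \<subseteq> S - {k}" using D''(1) k by auto
      show "S - {k} \<subseteq> V" using SV by auto
    qed
    hence Pk: "k \<in> S \<and> dominating V E (S - {k})" using k by simp
    define y where "y = (ARG_MIN idx y. y \<in> S \<and> dominating V E (S - {y}))"
    have yP: "y \<in> S \<and> dominating V E (S - {y})" unfolding y_def by (rule argmin_in[where P="\<lambda>y. y \<in> S \<and> dominating V E (S - {y})", OF Pk])
    have "y \<notin> X \<union> {v}"
    proof
      assume yx: "y \<in> X \<union> {v}"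
      hence "y \<in> V" using XV by auto
      hence "y \<in> cnbh_set V E (S - {y})" using yP by (simp add: dominating_def)
      then obtain s where s: "s \<in> S - {y}" "y = s \<or> E s y" by (auto simp: cnbh_set_iff)
      have "s \<in> D'" using s that GI_def by auto
      hence "s \<in> D - {u} \<or> s \<in> X \<union> {v}" using D'_def by auto
      then show False using priv[OF yx] indep[OF _ yx] s by auto
    qed
    moreover have "greedy_step V E idx S = S - {y}" using False by (simp add: greedy_step_def y_def)
    ultimately show ?thesis using that yP GI_def by auto
  qed
  have "GI ((greedy_step V E idx ^^ n) D')" for n
  proof (induction n)
    case 0 then show ?case using D'd GI_def D'_def by auto
  next
    case (Suc n) then show ?case using GIstep by simp
  qed
  hence GDs: "GI Ds" by (simp add: Ds_def greedy_removal_def)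
  have Dsd: "dominating V E Ds" and DsD': "Ds \<subseteq> D'" and XDs: "X \<union> {v} \<subseteq> Ds"
    using GDs GI_def by auto
  have ZD: "Z \<subseteq> D - {u}" using Z_def D'_def XDs by auto
  have nN: "y \<notin> cnbh_set V E (X \<union> {v})" if "y \<in> D - {u}" for y
    using priv[OF _ that] by (auto simp: cnbh_set_iff)
  have DsX: "Ds - (X \<union> {v}) \<subseteq> D - {u}" using DsD' D'_def by auto
  have part1: "\<forall>z\<in>Z.
               z \<notin> cnbh_set V E (X \<union> {v}) \<and>
               (\<exists>y\<in>Ds - (X \<union> {v}). E z y) \<and>
               (\<exists>x\<in>cnbh_set V E (X \<union> {v}) - cnbh V E u.
                  E z x \<and> x \<notin> cnbh_set V E (Ds - (X \<union> {v})))"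
  proof
    fix z assume zZ: "z \<in> Z"
    have zD: "z \<in> D - {u}" using zZ ZD by auto
    have c1: "z \<notin> cnbh_set V E (X \<union> {v})" using nN[OF zD] .
    have zV: "z \<in> V" using zD DV by auto
    hence "z \<in> cnbh_set V E Ds" using Dsd by (simp add: dominating_def)
    then obtain y where y: "y \<in> Ds" "z = y \<or> E y z" by (auto simp: cnbh_set_iff)
    have "z \<notin> Ds" using zZ Z_def by auto
    hence "E y z" using y by auto
    moreover have "y \<notin> X \<union> {v}" using c1 \<open>E y z\<close> zV by (auto simp: cnbh_set_iff)
    ultimately have c2: "\<exists>y\<in>Ds - (X \<union> {v}). E z y" using y sym by auto
    \<comment> \<open>private vertex of z\<close>
    have "\<not> dominating V E (D - {z})" using assms(3) zD by (auto simp: min_dominating_def)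
    moreover have "D - {z} \<subseteq> V" using DV by auto
    moreover have "cnbh_set V E (D - {z}) \<subseteq> V" using DV by (auto simp: cnbh_set_iff)
    ultimately have "\<not> V \<subseteq> cnbh_set V E (D - {z})" by (auto simp: dominating_def)
    then obtain p where pV: "p \<in> V" and pn: "p \<notin> cnbh_set V E (D - {z})"
      by blast
    have "p \<in> cnbh_set V E D" using Dd pV by (simp add: dominating_def)
    hence pz: "p = z \<or> E z p" using pn by (auto simp: cnbh_set_iff)
    have "p \<in> cnbh_set V E Ds" using Dsd pV by (simp add: dominating_def)
    then obtain s where s: "s \<in> Ds" "p = s \<or> (p \<in> V \<and> E s p)" by (auto simp: cnbh_set_iff)
    have "s \<notin> D - {z}" using s pn by (auto simp: cnbh_set_iff)
    moreover have "s \<noteq> z" using s(1) \<open>z \<notin> Ds\<close> by auto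
    ultimately have "s \<notin> D" by auto
    hence sX: "s \<in> X \<union> {v}" using s(1) DsD' D'_def by auto
    hence pX: "p \<in> cnbh_set V E (X \<union> {v})" using s by (auto simp: cnbh_set_iff)
    hence "p \<noteq> z" using c1 by auto
    hence Ezp: "E z p" using pz by auto
    have "p \<notin> cnbh V E u" using pn zD assms(4) by (auto simp: cnbh_set_iff cnbh_def nbh_def)
    moreover have "p \<notin> cnbh_set V E (Ds - (X \<union> {v}))"
      using pn DsX \<open>z \<notin> Ds\<close> by (auto simp: cnbh_set_iff)
    ultimately have c3: "\<exists>x\<in>cnbh_set V E (X \<union> {v}) - cnbh V E u.
                  E z x \<and> x \<notin> cnbh_set V E (Ds - (X \<union> {v}))" using pX Ezp by auto
    show "z \<notin> cnbh_set V E (X \<union> {v}) \<and>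
               (\<exists>y\<in>Ds - (X \<union> {v}). E z y) \<and>
               (\<exists>x\<in>cnbh_set V E (X \<union> {v}) - cnbh V E u.
                  E z x \<and> x \<notin> cnbh_set V E (Ds - (X \<union> {v})))" using c1 c2 c3 by blast
  qed
  have part2: "\<forall>x\<in>cnbh_set V E (X \<union> {v}) - cnbh V E u.
               x \<notin> cnbh_set V E (Ds - (X \<union> {v})) \<longrightarrow> (\<exists>z\<in>Z. E x z)"
  proof (intro ballI impI)
    fix x assume x: "x \<in> cnbh_set V E (X \<union> {v}) - cnbh V E u"
      and xn: "x \<notin> cnbh_set V E (Ds - (X \<union> {v}))"
    have xV: "x \<in> V" using x XV by (auto simp: cnbh_set_iff)
    have "x \<in> cnbh_set V E D" using xV Dd by (simp add: dominating_def)
    then obtain d where d: "d \<in> D" "x = d \<or> E d x" unfolding cnbh_set_iff by blast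
    have du: "d \<noteq> u" using d x xV by (auto simp: cnbh_def nbh_def)
    have "x \<noteq> d" using nN[of d] d du x by auto
    hence Edx: "E d x" using d by auto
    have "d \<notin> X \<union> {v}" using priv d du by blast
    hence "d \<notin> Ds" using xn Edx xV by (auto simp: cnbh_set_iff)
    hence "d \<in> Z" using d du Z_def D'_def by auto
    thus "\<exists>z\<in>Z. E x z" using Edx sym by auto
  qed
  show ?thesis using part1 part2 unfolding X_def[symmetric] D'_def[symmetric] Ds_def[symmetric] Z_def[symmetric] Let_def
    by simp
qed

end
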